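(* If an atomic flow $B$ is cycle-free and $B\to_{\mathsf{se}}C$, then $C$ is cycle-free.
   Context: An atomic flow is a tuple $(V,E,\eta,up,lo)$: finite sets of vertices and edges, a labelling of vertices by interaction, cut, weakening, coweakening, contraction or cocontraction, and maps $up:E\to V\cup\{\top\}$, $lo:E\to V\cup\{\bot\}$. Upper edges of $\nu$: $lo(\epsilon)=\nu$; lower edges: $up(\epsilon)=\nu$. (Upper, lower) edge numbers: $(0,2)$ interaction, $(2,0)$ cut, $(0,1)$ weakening, $(1,0)$ coweakening, $(2,1)$ contraction, $(1,2)$ cocontraction; no directed cycles; there is $\pi:E\to\{+,-\}$ giving all edges of a (co)contraction the same sign and the two edges of an interaction/cut different signs. Edges with $up=\top$ are the upper edges of the flow, edges with $lo=\bot$ its lower edges. A path from $\nu$ to $\nu'$ is a sequence of edges $\epsilon_1,\dots,\epsilon_h$ with $lo(\epsilon_i)=up(\epsilon_{i+1})$, $up(\epsilon_1)=\nu$, $lo(\epsilon_h)=\nu'$; its reversal is a path from $\nu'$ to $\nu$. An $\mathsf{ai}$-path from $\nu$ to $\nu'$ is either a path from $\nu$ to $\nu'$ or a sequence $\epsilon_1,\dots,\epsilon_k,\epsilon_{k+1},\dots,\epsilon_h$ with $\epsilon_k\neq\epsilon_{k+1}$ such that, for some interaction or cut vertex $\nu''$, $\epsilon_1,\dots,\epsilon_k$ is an $\mathsf{ai}$-path from $\nu$ to $\nu''$ and $\epsilon_{k+1},\dots,\epsilon_h$ is an $\mathsf{ai}$-path from $\nu''$ to $\nu'$. An $\mathsf{ai}$-cycle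 is an $\mathsf{ai}$-path from a vertex to itself in which no edge appears twice; a flow is cycle-free if it has none. A simple edge is an edge from an interaction vertex to a cut vertex. Reduction $\to_{\mathsf{se}}$: let $B$ contain a simple edge $\epsilon$ from interaction $\iota$ to cut $\kappa$; let $\epsilon_2$ be the other lower edge of $\iota$ and $\epsilon_3$ the other upper edge of $\kappa$. Let $A$ be obtained from $B$ by deleting $\iota$, $\kappa$ and $\epsilon$, so that $\epsilon_2$ becomes an upper edge and $\epsilon_3$ a lower edge of $A$; let $\epsilon_1,\dots,\epsilon_h$ be the remaining upper edges and $\epsilon'_1,\dots,\epsilon'_k$ the remaining lower edges of $A$ ($h,k\ge0$). Take two disjoint copies $\tilde A$, $\hat A$ of $A$ (copies of edges marked with tildes and hats). Then $B\to_{\mathsf{se}}C$ where $C$ is formed as follows: $\tilde\epsilon_2$ becomes the lower edge of a new weakening vertex; $\hat\epsilon_3$ becomes the upper edge of a new coweakening vertex; $\tilde\epsilon_3$ and $\hat\epsilon_2$ are identified into a single edge (from the upper endpoint of $\tilde\epsilon_3$ in $\tilde A$ to the lower endpoint of $\hat\epsilon_2$ in $\hat A$); for each $i\le h$ a new cocontraction vertex has upper edge $\epsilon_i$ (an upper edge of $C$) and lower edges $\tilde\epsilon_i,\hat\epsilon_i$; for each $j\le k$ a new contraction vertex has upper edges $\tilde\epsilon'_j,\hat\epsilon'_j$ and lower edge $\epsilon'_j$ (a lower edge of $C$). *)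

theory Defs
  imports Main
begin

datatype vkind = Interaction | Cut | Weakening | Coweakening | Contraction | Cocontraction

fun upper_num :: "vkind \<Rightarrow> nat" where
  "upper_num Interaction = 0" | "upper_num Cut = 2" | "upper_num Weakening = 0"
| "upper_num Coweakening = 1" | "upper_num Contraction = 2" | "upper_num Cocontraction = 1"

fun lower_num :: "vkind \<Rightarrow> nat" where
  "lower_num Interaction = 2" | "lower_num Cut = 0" | "lower_num Weakening = 1"
| "lower_num Coweakening = 0" | "lower_num Contraction = 1" | "lower_num Cocontraction = 2"

text \<open>A flow: vertices, edges, labelling, and maps up/lo.  The value None of
  fup stands for top, the value None of flo stands for bottom.\<close>
record ('v, 'e) flow =
  fverts :: "'v set"
  fedges :: "'e set"
  flab :: "'v \<Rightarrow> vkind"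
  fup :: "'e \<Rightarrow> 'v option"
  flo :: "'e \<Rightarrow> 'v option"

definition dpath :: "('v, 'e) flow \<Rightarrow> 'v \<Rightarrow> 'v \<Rightarrow> 'e list \<Rightarrow> bool" where
  "dpath F v v' es \<longleftrightarrow> es \<noteq> [] \<and> set es \<subseteq> fedges F
     \<and> fup F (hd es) = Some v \<and> flo F (last es) = Some v'
     \<and> (\<forall>i. Suc i < length es \<longrightarrow> flo F (es ! i) \<noteq> None \<and> flo F (es ! i) = fup F (es ! Suc i))"

definition fpath :: "('v, 'e) flow \<Rightarrow> 'v \<Rightarrow> 'v \<Rightarrow> 'e list \<Rightarrow> bool" where
  "fpath F v v' es \<longleftrightarrow> dpath F v v' es \<or> dpath F v' v (rev es)"

definition atomic_flow :: "('v, 'e) flow \<Rightarrow> bool" where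
  "atomic_flow F \<longleftrightarrow>
     finite (fverts F) \<and> finite (fedges F)
     \<and> (\<forall>e\<in>fedges F. (\<forall>v. fup F e = Some v \<longrightarrow> v \<in> fverts F) \<and> (\<forall>v. flo F e = Some v \<longrightarrow> v \<in> fverts F))
     \<and> (\<forall>v\<in>fverts F. card {e\<in>fedges F. flo F e = Some v} = upper_num (flab F v)
                     \<and> card {e\<in>fedges F. fup F e = Some v} = lower_num (flab F v))
     \<and> \<not> (\<exists>v es. dpath F v v es)
     \<and> (\<exists>\<pi> :: 'e \<Rightarrow> bool. \<forall>v\<in>fverts F. \<forall>e\<in>fedges F. \<forall>e'\<in>fedges F.
          (fup F e = Some v \<or> flo F e = Some v) \<longrightarrow> (fup F e' = Some v \<or> flo F e' = Some v) \<longrightarrow>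
          (flab F v \<in> {Contraction, Cocontraction} \<longrightarrow> \<pi> e = \<pi> e')
          \<and> (flab F v \<in> {Interaction, Cut} \<longrightarrow> e \<noteq> e' \<longrightarrow> \<pi> e \<noteq> \<pi> e'))"

inductive ai_path :: "('v, 'e) flow \<Rightarrow> 'v \<Rightarrow> 'v \<Rightarrow> 'e list \<Rightarrow> bool" for F where
  ai_base: "fpath F v v' es \<Longrightarrow> ai_path F v v' es"
| ai_join: "ai_path F v w xs \<Longrightarrow> ai_path F w v' ys \<Longrightarrow> w \<in> fverts F
            \<Longrightarrow> flab F w \<in> {Interaction, Cut} \<Longrightarrow> last xs \<noteq> hd ys
            \<Longrightarrow> ai_path F v v' (xs @ ys)"

definition cycle_free :: "('v, 'e) flow \<Rightarrow> bool" where
  "cycle_free F \<longleftrightarrow> \<not> (\<exists>v es. v \<in> fverts F \<and> ai_path F v v es \<and> distinct es)"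

text \<open>Vertices of C: tilde / hat copies of vertices of A, the new weakening and
  coweakening, and the new cocontractions / contractions indexed by the upper /
  lower edges of A they serve.\<close>
datatype ('v, 'e) se_vertex = TlV 'v | HtV 'v | NewW | NewCW | CoConV 'e | ConV 'e

text \<open>Edges of C: tilde / hat copies of edges of A (tilde eps3 and hat eps2 are
  merged into Mid), the upper edges OutU e of C (above the cocontraction for e) and
  the lower edges OutL e of C (below the contraction for e).\<close>
datatype 'e se_edge = TlE 'e | HtE 'e | Mid | OutU 'e | OutL 'e

definition se_result ::
  "('v, 'e) flow \<Rightarrow> 'v \<Rightarrow> 'v \<Rightarrow> 'e \<Rightarrow> 'e \<Rightarrow> 'e \<Rightarrow> (('v, 'e) se_vertex, 'e se_edge) flow" where
  "se_result B \<iota> \<kappa> \<epsilon> \<epsilon>2 \<epsilon>3 =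
    (let VA = fverts B - {\<iota>, \<kappa>};
         EA = fedges B - {\<epsilon>};
         upA = (\<lambda>e. if e = \<epsilon>2 then None else fup B e);
         loA = (\<lambda>e. if e = \<epsilon>3 then None else flo B e);
         UA = {e\<in>EA. upA e = None} - {\<epsilon>2};
         LA = {e\<in>EA. loA e = None} - {\<epsilon>3};
         tup = (\<lambda>e. case upA e of Some v \<Rightarrow> Some (TlV v)
                     | None \<Rightarrow> if e = \<epsilon>2 then Some NewW else Some (CoConV e));
         tlo = (\<lambda>e. case loA e of Some v \<Rightarrow> Some (TlV v) | None \<Rightarrow> Some (ConV e));
         hup = (\<lambda>e. case upA e of Some v \<Rightarrow> Some (HtV v) | None \<Rightarrow> Some (CoConV e));
         hlo = (\<lambda>e. case loA e of Some v \<Rightarrow> Some (HtV v)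
                     | None \<Rightarrow> if e = \<epsilon>3 then Some NewCW else Some (ConV e))
     in \<lparr> fverts = TlV ` VA \<union> HtV ` VA \<union> {NewW, NewCW} \<union> CoConV ` UA \<union> ConV ` LA,
          fedges = TlE ` (EA - {\<epsilon>3}) \<union> HtE ` (EA - {\<epsilon>2}) \<union> {Mid} \<union> OutU ` UA \<union> OutL ` LA,
          flab = (\<lambda>x. case x of TlV v \<Rightarrow> flab B v | HtV v \<Rightarrow> flab B v
                     | NewW \<Rightarrow> Weakening | NewCW \<Rightarrow> Coweakening
                     | CoConV _ \<Rightarrow> Cocontraction | ConV _ \<Rightarrow> Contraction),
          fup = (\<lambda>x. case x of TlE e \<Rightarrow> tup e | HtE e \<Rightarrow> hup e | Mid \<Rightarrow> tup \<epsilon>3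
                     | OutU e \<Rightarrow> None | OutL e \<Rightarrow> Some (ConV e)),
          flo = (\<lambda>x. case x of TlE e \<Rightarrow> tlo e | HtE e \<Rightarrow> hlo e | Mid \<Rightarrow> hlo \<epsilon>2
                     | OutU e \<Rightarrow> Some (CoConV e) | OutL e \<Rightarrow> None) \<rparr>)"

definition se_step :: "('v, 'e) flow \<Rightarrow> (('v, 'e) se_vertex, 'e se_edge) flow \<Rightarrow> bool" where
  "se_step B C \<longleftrightarrow> (\<exists>\<iota> \<kappa> \<epsilon> \<epsilon>2 \<epsilon>3.
      \<iota> \<in> fverts B \<and> \<kappa> \<in> fverts B \<and> flab B \<iota> = Interaction \<and> flab B \<kappa> = Cut
      \<and> \<epsilon> \<in> fedges B \<and> fup B \<epsilon> = Some \<iota> \<and> flo B \<epsilon> = Some \<kappa>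
      \<and> \<epsilon>2 \<in> fedges B \<and> \<epsilon>2 \<noteq> \<epsilon> \<and> fup B \<epsilon>2 = Some \<iota>
      \<and> \<epsilon>3 \<in> fedges B \<and> \<epsilon>3 \<noteq> \<epsilon> \<and> flo B \<epsilon>3 = Some \<kappa>
      \<and> C = se_result B \<iota> \<kappa> \<epsilon> \<epsilon>2 \<epsilon>3)"

end

theory Submission
  imports Defs
begin


definition step :: "('v,'e) flow \<Rightarrow> ('e \<times> bool) \<Rightarrow> 'v \<Rightarrow> 'v \<Rightarrow> bool" where
  "step F x a b \<longleftrightarrow> fst x \<in> fedges F \<and>
     (if snd x then fup F (fst x) = Some a \<and> flo F (fst x) = Some b
      else flo F (fst x) = Some a \<and> fup F (fst x) = Some b)"

definition joinok :: "('v,'e) flow \<Rightarrow> 'v \<Rightarrow> ('e \<times> bool) \<Rightarrow> ('e \<times> bool) \<Rightarrow> bool" where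
  "joinok F c x y \<longleftrightarrow> snd x = snd y \<or> (flab F c \<in> {Interaction, Cut} \<and> fst x \<noteq> fst y)"

fun walk :: "('v,'e) flow \<Rightarrow> 'v \<Rightarrow> 'v \<Rightarrow> ('e \<times> bool) list \<Rightarrow> bool" where
  "walk F a b [] = False"
| "walk F a b [x] = step F x a b"
| "walk F a b (x#y#ws) = (\<exists>c. step F x a c \<and> joinok F c x y \<and> walk F c b (y#ws))"

lemma step_unique: "step F x a b \<Longrightarrow> step F x a' b' \<Longrightarrow> a = a' \<and> b = b'"
  by (auto simp: step_def split: if_splits)

lemma step_opp: "step F (e,d) a b \<Longrightarrow> step F (e, \<not>d) a' b' \<Longrightarrow> a = b' \<and> b = a'"
  by (auto simp: step_def split: if_splits)

lemma walk_append:
  "walk F a c xs \<Longrightarrow> walk F c b ys \<Longrightarrow> joinok F c (last xs) (hd ys) \<Longrightarrow> walk F a b (xs @ ys)"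
proof (induction xs arbitrary: a)
  case Nil then show ?case by simp
next
  case (Cons x xs)
  show ?case
  proof (cases xs)
    case Nil
    with Cons.prems show ?thesis by (cases ys) auto
  next
    case (Cons y xs')
    with Cons.prems obtain c' where "step F x a c'" "joinok F c' x y" "walk F c' c xs" by auto
    with Cons.IH[of c'] Cons.prems Cons show ?thesis by auto
  qed
qed

lemma walk_split:
  "walk F a b (xs @ ys) \<Longrightarrow> xs \<noteq> [] \<Longrightarrow> ys \<noteq> [] \<Longrightarrow>
   \<exists>c. walk F a c xs \<and> walk F c b ys \<and> joinok F c (last xs) (hd ys)"
proof (induction xs arbitrary: a)
  case Nil then show ?case by simp
next
  case (Cons x xs)
  show ?case
  proof (cases xs)
    case Nil
    with Cons.prems show ?thesis by (cases ys) auto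
  next
    case (Cons y xs')
    with Cons.prems obtain c' where c': "step F x a c'" "joinok F c' x y" "walk F c' b (xs @ ys)" by auto
    with Cons.IH[of c'] Cons.prems obtain c where "walk F c' c xs" "walk F c b ys" "joinok F c (last xs) (hd ys)"
      using Cons by auto
    then show ?thesis using c' Cons by (intro exI[of _ c]) auto
  qed
qed

lemma walk_ne: "walk F a b ws \<Longrightarrow> ws \<noteq> []" by auto

lemma walk_hd_step: "walk F a b (x#ws) \<Longrightarrow> \<exists>c. step F x a c"
  by (cases ws) auto

lemma walk_last_step: "walk F a b ws \<Longrightarrow> \<exists>c. step F (last ws) c b"
  by (induction F a b ws rule: walk.induct) auto

definition flip :: "('e \<times> bool) \<Rightarrow> ('e \<times> bool)" where "flip x = (fst x, \<not> snd x)"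

lemma step_flip: "step F x a b \<Longrightarrow> step F (flip x) b a"
  by (auto simp: step_def flip_def)

lemma joinok_flip: "joinok F c x y \<Longrightarrow> joinok F c (flip y) (flip x)"
  by (auto simp: joinok_def flip_def)

lemma walk_rev: "walk F a b ws \<Longrightarrow> walk F b a (rev (map flip ws))"
proof (induction F a b ws rule: walk.induct)
  case (2 F a b x) then show ?case by (simp add: step_flip)
next
  case (3 F a b x y ws)
  then obtain c where c: "step F x a c" "joinok F c x y" "walk F c b (y#ws)" by auto
  then have "walk F b c (rev (map flip (y#ws)))" using 3 by auto
  moreover have "walk F c a [flip x]" using c step_flip by simp
  ultimately show ?case using walk_append[of F b c "rev (map flip (y#ws))" a "[flip x]"] joinok_flip[OF c(2)]
    by simp
qed auto

lemma map_fst_flip: "map fst (map flip ws) = map fst ws" by (induct ws) (auto simp: flip_def)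
lemma fst_flip[simp]: "fst (flip x) = fst x" by (simp add: flip_def)
lemma snd_flip[simp]: "snd (flip x) = (\<not> snd x)" by (simp add: flip_def)

lemma dpath_single: "e \<in> fedges F \<Longrightarrow> fup F e = Some a \<Longrightarrow> flo F e = Some b \<Longrightarrow> dpath F a b [e]"
  by (auto simp: dpath_def)

lemma dpath_ConsI:
  assumes e: "e \<in> fedges F" "fup F e = Some a" "flo F e = Some c" and d: "dpath F c b es"
  shows "dpath F a b (e#es)"
proof -
  from d have h: "es \<noteq> []" "set es \<subseteq> fedges F" "fup F (hd es) = Some c" "flo F (last es) = Some b"
    "\<forall>i. Suc i < length es \<longrightarrow> flo F (es ! i) \<noteq> None \<and> flo F (es ! i) = fup F (es ! Suc i)"
    unfolding dpath_def by blast+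
  have ALL: "\<forall>i. Suc i < length (e#es) \<longrightarrow> flo F ((e # es) ! i) \<noteq> None \<and> flo F ((e # es) ! i) = fup F ((e # es) ! Suc i)"
  proof (intro allI impI)
    fix i assume i: "Suc i < length (e # es)"
    show "flo F ((e # es) ! i) \<noteq> None \<and> flo F ((e # es) ! i) = fup F ((e # es) ! Suc i)"
    proof (cases i)
      case 0 then show ?thesis using h e by (simp add: hd_conv_nth)
    next
      case (Suc j) then show ?thesis by (metis Suc Suc_less_eq h(5) i length_Cons nth_Cons_Suc)
    qed
  qed
  show ?thesis unfolding dpath_def
  proof (intro conjI)
    show "flo F (last (e # es)) = Some b" using h by simp
    show "\<forall>i. Suc i < length (e#es) \<longrightarrow> flo F ((e # es) ! i) \<noteq> None \<and> flo F ((e # es) ! i) = fup F ((e # es) ! Suc i)" by (rule ALL)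
  qed (use h e in auto)
qed

lemma dpath_ConsD: "dpath F a b (e#e'#es) \<Longrightarrow> \<exists>c. e \<in> fedges F \<and> fup F e = Some a \<and> flo F e = Some c \<and> dpath F c b (e'#es)"
proof -
  assume d: "dpath F a b (e#e'#es)"
  then have A: "\<forall>i. Suc i < length (e#e'#es) \<longrightarrow> flo F ((e#e'#es) ! i) \<noteq> None \<and> flo F ((e#e'#es) ! i) = fup F ((e#e'#es) ! Suc i)"
    unfolding dpath_def by blast
  from A[rule_format, of 0] obtain c where c: "flo F e = Some c" "fup F e' = Some c" by (cases "flo F e") auto
  have ALL: "\<forall>i. Suc i < length (e'#es) \<longrightarrow> flo F ((e'#es) ! i) \<noteq> None \<and> flo F ((e'#es) ! i) = fup F ((e'#es) ! Suc i)"
  proof (intro allI impI)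
    fix i assume "Suc i < length (e'#es)"
    then show "flo F ((e'#es) ! i) \<noteq> None \<and> flo F ((e'#es) ! i) = fup F ((e'#es) ! Suc i)"
      using A[rule_format, of "Suc i"] by (metis Suc_less_eq length_Cons nth_Cons_Suc)
  qed
  moreover have "dpath F c b (e'#es)" unfolding dpath_def
  proof (intro conjI)
    show "set (e'#es) \<subseteq> fedges F" using d by (simp add: dpath_def)
    show "flo F (last (e' # es)) = Some b" using d by (simp add: dpath_def)
    show "fup F (hd (e' # es)) = Some c" using c by simp
    show "e' # es \<noteq> []" by simp
  qed (rule ALL)
  moreover have "e \<in> fedges F" "fup F e = Some a" using d by (auto simp: dpath_def)
  ultimately show ?thesis using c by blast
qed

lemma dpath_walk: "dpath F a b es \<Longrightarrow> walk F a b (map (\<lambda>e. (e,True)) es)"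
proof (induction es arbitrary: a)
  case Nil then show ?case by (simp add: dpath_def)
next
  case (Cons e es)
  show ?case
  proof (cases es)
    case Nil with Cons.prems show ?thesis by (auto simp: dpath_def step_def)
  next
    case (Cons e' es')
    with Cons.prems dpath_ConsD[of F a b e e' es'] obtain c where "e \<in> fedges F" "fup F e = Some a" "flo F e = Some c" "dpath F c b es" by blast
    with Cons.IH[of c] Cons show ?thesis by (auto simp: step_def joinok_def)
  qed
qed

lemma walk_down_dpath: "walk F a b ws \<Longrightarrow> \<forall>x\<in>set ws. snd x \<Longrightarrow> dpath F a b (map fst ws)"
proof (induction F a b ws rule: walk.induct)
  case (2 F a b x) then show ?case by (auto simp: step_def dpath_def)
next
  case (3 F a b x y ws)
  then obtain c where c: "step F x a c" "walk F c b (y#ws)" by auto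
  with 3 have "dpath F c b (map fst (y#ws))" by auto
  moreover have "snd x" using 3(3) by simp
  ultimately show ?case using c(1) dpath_ConsI[of "fst x" F a c b "map fst (y#ws)"] by (auto simp: step_def)
qed auto

lemma walk_fpath: "walk F a b ws \<Longrightarrow> (\<forall>x\<in>set ws. snd x = d) \<Longrightarrow> fpath F a b (map fst ws)"
proof (cases d)
  case True
  assume "walk F a b ws" "\<forall>x\<in>set ws. snd x = d"
  with True show ?thesis using walk_down_dpath by (auto simp: fpath_def)
next
  case False
  assume w: "walk F a b ws" "\<forall>x\<in>set ws. snd x = d"
  have "walk F b a (rev (map flip ws))" using walk_rev[OF w(1)] .
  moreover have "\<forall>x\<in>set (rev (map flip ws)). snd x" using w(2) False by (auto simp: flip_def)
  ultimately have "dpath F b a (map fst (rev (map flip ws)))" by (rule walk_down_dpath)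
  then have "dpath F b a (rev (map fst ws))" by (simp add: rev_map comp_def)
  then show ?thesis by (simp add: fpath_def)
qed

lemma ai_path_walk: "ai_path F a b es \<Longrightarrow> \<exists>ws. walk F a b ws \<and> map fst ws = es"
proof (induction rule: ai_path.induct)
  case (ai_base v v' es)
  then show ?case
  proof (unfold fpath_def, elim disjE)
    assume "dpath F v v' es" then have "walk F v v' (map (\<lambda>e. (e,True)) es)" by (rule dpath_walk)
    then show ?thesis by (intro exI[of _ "map (\<lambda>e. (e,True)) es"]) (simp add: comp_def)
  next
    assume "dpath F v' v (rev es)"
    then have "walk F v' v (map (\<lambda>e. (e,True)) (rev es))" by (rule dpath_walk)
    from walk_rev[OF this] show ?thesis
      by (intro exI[of _ "rev (map flip (map (\<lambda>e. (e,True)) (rev es)))"]) (simp add: rev_map comp_def)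
  qed
next
  case (ai_join v w xs v' ys)
  then obtain wx wy where "walk F v w wx" "map fst wx = xs" "walk F w v' wy" "map fst wy = ys" by blast
  moreover have "wx \<noteq> []" "wy \<noteq> []" using calculation by auto
  ultimately show ?case using ai_join.hyps
    by (intro exI[of _ "wx @ wy"]) (auto intro!: walk_append simp: joinok_def last_map hd_map)
qed


lemma walk_seg: "walk F a b ws \<Longrightarrow> \<exists>seg rest c. ws = seg @ rest \<and> seg \<noteq> [] \<and> (\<forall>x\<in>set seg. snd x = snd (hd ws))
   \<and> walk F a c seg \<and> ((rest = [] \<and> c = b) \<or> (rest \<noteq> [] \<and> walk F c b rest \<and> snd (hd rest) \<noteq> snd (hd ws) \<and> joinok F c (last seg) (hd rest)))"
proof (induction F a b ws rule: walk.induct)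
  case (2 F a b x) then show ?case by (intro exI[of _ "[x]"] exI[of _ "[]"] exI[of _ b]) auto
next
  case (3 F a b x y ws)
  then obtain c1 where c1: "step F x a c1" "joinok F c1 x y" "walk F c1 b (y#ws)" by auto
  with 3(1) obtain seg rest c where IH: "y#ws = seg @ rest" "seg \<noteq> []" "\<forall>x\<in>set seg. snd x = snd (hd (y#ws))"
    "walk F c1 c seg" "((rest = [] \<and> c = b) \<or> (rest \<noteq> [] \<and> walk F c b rest \<and> snd (hd rest) \<noteq> snd (hd (y#ws)) \<and> joinok F c (last seg) (hd rest)))"
    by blast
  show ?case
  proof (cases "snd x = snd y")
    case True
    from IH(1,2) obtain seg' where seg: "seg = y # seg'" by (cases seg) auto
    have W: "walk F a c (x # seg)" using c1(1,2) IH(4) unfolding seg by (simp only: walk.simps) blast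
    have A: "x#y#ws = (x#seg) @ rest" using IH(1) by simp
    have Bq: "\<forall>z\<in>set (x#seg). snd z = snd (hd (x#y#ws))" using IH(3) True by simp
    have D: "((rest = [] \<and> c = b) \<or> (rest \<noteq> [] \<and> walk F c b rest \<and> snd (hd rest) \<noteq> snd (hd (x#y#ws)) \<and> joinok F c (last (x#seg)) (hd rest)))"
      using IH(5) True IH(2) by simp
    show ?thesis using W A Bq D by blast
  next
    case False
    have "walk F a c1 [x]" using c1 by simp
    moreover have "x#y#ws = [x] @ (y#ws)" by simp
    ultimately show ?thesis using c1 False by (intro exI[of _ "[x]"] exI[of _ "y#ws"] exI[of _ c1]) simp
  qed
qed auto

lemma walk_ai:
  assumes ends: "\<forall>e\<in>fedges F. (\<forall>v. fup F e = Some v \<longrightarrow> v \<in> fverts F) \<and> (\<forall>v. flo F e = Some v \<longrightarrow> v \<in> fverts F)"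
  shows "walk F a b ws \<Longrightarrow> ai_path F a b (map fst ws)"
proof (induction "length ws" arbitrary: a ws rule: less_induct)
  case less
  from walk_seg[OF less.prems] obtain seg rest c where S: "ws = seg @ rest" "seg \<noteq> []" "\<forall>x\<in>set seg. snd x = snd (hd ws)"
   "walk F a c seg" "((rest = [] \<and> c = b) \<or> (rest \<noteq> [] \<and> walk F c b rest \<and> snd (hd rest) \<noteq> snd (hd ws) \<and> joinok F c (last seg) (hd rest)))"
    by blast
  have fp: "ai_path F a c (map fst seg)" using walk_fpath[OF S(4) S(3)] by (rule ai_base)
  show ?case
  proof (cases "rest = []")
    case True
    with S(5) have "c = b" by blast
    with fp have "ai_path F a b (map fst seg)" by simp
    then show ?thesis using S(1) True by simp
  next
    case False
    from S(5) False have R: "walk F c b rest" "snd (hd rest) \<noteq> snd (hd ws)" "joinok F c (last seg) (hd rest)" by blast+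
    have "length rest < length ws" using S(1) S(2) by simp
    then have IH: "ai_path F c b (map fst rest)" using less.hyps R(1) by presburger
    have hdws: "hd ws = hd seg" using S(1) S(2) by simp
    have "snd (last seg) = snd (hd ws)" using S(2,3) by simp
    with R(2,3) have j: "flab F c \<in> {Interaction, Cut}" "fst (last seg) \<noteq> fst (hd rest)"
      by (auto simp: joinok_def)
    have "walk F c b (hd rest # tl rest)" using R(1) False by simp
    then obtain c' where "step F (hd rest) c c'" using walk_hd_step[of F c b "hd rest" "tl rest"] by blast
    then have "c \<in> fverts F" using ends by (auto simp: step_def split: if_splits)
    have "ai_path F a b (map fst seg @ map fst rest)"
      by (rule ai_join[OF fp IH \<open>c \<in> fverts F\<close> j(1)]) (use j(2) S(2) False in \<open>simp add: last_map hd_map\<close>)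
    then show ?thesis using S(1) S(2) by simp
  qed
qed

lemma walk_shortcut: "walk F a a ws \<Longrightarrow> \<exists>c ws'. walk F c c ws' \<and> distinct (map fst ws')"
proof (induction "length ws" arbitrary: a ws rule: less_induct)
  case less
  show ?case
  proof (cases "distinct (map fst ws)")
    case True with less.prems show ?thesis by blast
  next
    case False
    then obtain xs y ys zs where "map fst ws = xs @ [y] @ ys @ [y] @ zs" using not_distinct_decomp by blast
    then obtain p rest where "ws = p @ rest" "map fst rest = y # ys @ y # zs"
      using map_eq_append_conv[of fst ws xs "[y] @ ys @ [y] @ zs"] by auto
    moreover then obtain x1 rest' where "rest = x1 # rest'" "fst x1 = y" "map fst rest' = ys @ y # zs"
      by (cases rest) auto
    moreover then obtain q rest'' where "rest' = q @ rest''" "map fst rest'' = y # zs"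
      using map_eq_append_conv[of fst rest' ys "y # zs"] by auto
    moreover then obtain x2 r where "rest'' = x2 # r" "fst x2 = y"
      by (cases rest'') auto
    ultimately have D: "ws = p @ x1 # q @ x2 # r" "fst x1 = y" "fst x2 = y" by simp_all
    have w: "walk F a a (p @ (x1 # q @ [x2]) @ r)" using less.prems D by simp
    have "\<exists>c d. walk F c d (x1 # q @ [x2])"
    proof -
      have "\<exists>c. walk F c a ((x1 # q @ [x2]) @ r)"
      proof (cases p)
        case Nil then show ?thesis using w by (intro exI[of _ a]) simp
      next
        case Cons
        then have "p \<noteq> []" by simp
        from walk_split[OF w this] show ?thesis by blast
      qed
      then obtain c where c: "walk F c a ((x1 # q @ [x2]) @ r)" by blast
      have "\<exists>d. walk F c d (x1 # q @ [x2])"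
      proof (cases r)
        case Nil then show ?thesis using c by (intro exI[of _ a]) simp
      next
        case Cons
        then have "r \<noteq> []" by simp
        from walk_split[OF c _ this] show ?thesis by blast
      qed
      then show ?thesis by blast
    qed
    then obtain c d where cd: "walk F c d (x1 # q @ [x2])" by blast
    obtain c1 where s1: "step F x1 c c1" using walk_hd_step[OF cd] by blast
    obtain d1 where s2: "step F x2 d1 d" using walk_last_step[OF cd] by auto
    have len: "length (x1 # q @ [x2]) \<le> length ws" using D by simp
    show ?thesis
    proof (cases "snd x1 = snd x2")
      case True
      then have x12: "x1 = x2" using D by (cases x1, cases x2) auto
      have "walk F c d1 (x1 # q)"
      proof (cases q)
        case Nil
        then have "\<exists>m. step F x1 c m \<and> joinok F m x1 x2 \<and> step F x2 m d" using cd by simp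
        then obtain m where "step F x1 c m" "step F x2 m d" by blast
        then show ?thesis using s2 step_unique[of F x2 m d d1 d] Nil by simp
      next
        case Cons
        have "\<exists>d'. walk F c d' (x1#q) \<and> walk F d' d [x2] \<and> joinok F d' (last (x1#q)) (hd [x2])"
          using walk_split[of F c d "x1#q" "[x2]"] cd by simp
        then obtain d' where "walk F c d' (x1#q)" "walk F d' d [x2]" by blast
        then show ?thesis using s2 walk_last_step[of F d' d "[x2]"] step_unique[of F x2 _ d d1 d] by auto
      qed
      moreover have "d1 = c" using s1 s2 x12 step_unique by metis
      ultimately have "walk F c c (x1 # q)" by simp
      moreover have "length (x1 # q) < length ws" using len by simp
      ultimately show ?thesis using less.hyps by blast
    next
      case False
      obtain e d0 where x1: "x1 = (e, d0)" by (cases x1)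
      with False D have x2: "x2 = (e, \<not> d0)" by (cases x2) auto
      from step_opp[OF s1[unfolded x1] s2[unfolded x2]] have eq: "c = d" "c1 = d1" by auto
      show ?thesis
      proof (cases q)
        case Nil
        then have "\<exists>m. step F x1 c m \<and> joinok F m x1 x2 \<and> step F x2 m d" using cd by simp
        then obtain m where "step F x1 c m" "joinok F m x1 x2" by blast
        then have "joinok F c1 x1 x2" using s1 step_unique[of F x1 c m c c1] by simp
        then show ?thesis using x1 x2 by (simp add: joinok_def)
      next
        case (Cons q1 qs)
        have "\<exists>m. walk F c m [x1] \<and> walk F m d (q @ [x2]) \<and> joinok F m (last [x1]) (hd (q @ [x2]))"
          using walk_split[of F c d "[x1]" "q @ [x2]"] cd by simp
        then obtain m where m1: "walk F c m [x1]" "walk F m d (q @ [x2])" by blast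
        have "m = c1" using m1(1) s1 step_unique[of F x1 c m c c1] by simp
        have "\<exists>m'. walk F m m' q \<and> walk F m' d [x2] \<and> joinok F m' (last q) (hd [x2])"
          using walk_split[of F m d q "[x2]"] m1(2) Cons by simp
        then obtain m' where m2: "walk F m m' q" "walk F m' d [x2]" by blast
        have "m' = d1" using m2(2) s2 step_unique[of F x2 m' d d1 d] by simp
        with m2 \<open>m = c1\<close> eq have "walk F c1 c1 q" by simp
        moreover have "length q < length ws" using len by simp
        ultimately show ?thesis using less.hyps by blast
      qed
    qed
  qed
qed



lemma se_fedges:
  "TlE x \<in> fedges (se_result B i k e0 e2 e3) \<longleftrightarrow> x \<in> fedges B \<and> x \<noteq> e0 \<and> x \<noteq> e3"
  "HtE x \<in> fedges (se_result B i k e0 e2 e3) \<longleftrightarrow> x \<in> fedges B \<and> x \<noteq> e0 \<and> x \<noteq> e2"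
  "Mid \<in> fedges (se_result B i k e0 e2 e3)"
  by (auto simp: se_result_def Let_def)

lemma se_fup:
  "fup (se_result B i k e0 e2 e3) (TlE x) = (if x = e2 then Some NewW else case fup B x of Some v \<Rightarrow> Some (TlV v) | None \<Rightarrow> Some (CoConV x))"
  "fup (se_result B i k e0 e2 e3) (HtE x) = (if x = e2 then Some (CoConV x) else case fup B x of Some v \<Rightarrow> Some (HtV v) | None \<Rightarrow> Some (CoConV x))"
  "fup (se_result B i k e0 e2 e3) Mid = (if e3 = e2 then Some NewW else case fup B e3 of Some v \<Rightarrow> Some (TlV v) | None \<Rightarrow> Some (CoConV e3))"
  "fup (se_result B i k e0 e2 e3) (OutU x) = None"
  "fup (se_result B i k e0 e2 e3) (OutL x) = Some (ConV x)"
  by (auto simp: se_result_def Let_def split: option.splits)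

lemma se_flo:
  "flo (se_result B i k e0 e2 e3) (TlE x) = (if x = e3 then Some (ConV x) else case flo B x of Some v \<Rightarrow> Some (TlV v) | None \<Rightarrow> Some (ConV x))"
  "flo (se_result B i k e0 e2 e3) (HtE x) = (if x = e3 then Some NewCW else case flo B x of Some v \<Rightarrow> Some (HtV v) | None \<Rightarrow> Some (ConV x))"
  "flo (se_result B i k e0 e2 e3) Mid = (if e2 = e3 then Some NewCW else case flo B e2 of Some v \<Rightarrow> Some (HtV v) | None \<Rightarrow> Some (ConV e2))"
  "flo (se_result B i k e0 e2 e3) (OutU x) = Some (CoConV x)"
  "flo (se_result B i k e0 e2 e3) (OutL x) = None"
  by (auto simp: se_result_def Let_def split: option.splits)

lemma se_flab: "flab (se_result B i k e0 e2 e3) v = (case v of TlV v \<Rightarrow> flab B v | HtV v \<Rightarrow> flab B v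
                     | NewW \<Rightarrow> Weakening | NewCW \<Rightarrow> Coweakening
                     | CoConV _ \<Rightarrow> Cocontraction | ConV _ \<Rightarrow> Contraction)"
  by (simp add: se_result_def Let_def)

lemma se_fverts: "fverts (se_result B i k e0 e2 e3) = TlV ` (fverts B - {i, k}) \<union> HtV ` (fverts B - {i, k}) \<union> {NewW, NewCW} \<union>
   CoConV ` ({e\<in>fedges B - {e0}. (if e = e2 then None else fup B e) = None} - {e2}) \<union> ConV ` ({e\<in>fedges B - {e0}. (if e = e3 then None else flo B e) = None} - {e3})"
  by (simp add: se_result_def Let_def)

lemma L0:
  "flo (se_result B i k e0 e2 e3) x = Some (CoConV z) \<Longrightarrow> x = OutU z"
  "fup (se_result B i k e0 e2 e3) x = Some (ConV z) \<Longrightarrow> x = OutL z"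
  "flo (se_result B i k e0 e2 e3) x \<noteq> Some NewW"
  "fup (se_result B i k e0 e2 e3) x \<noteq> Some NewCW"
  by (cases x; auto simp: se_fup se_flo split: if_splits option.splits)+

lemma joingood:
  assumes "step (se_result B i k e0 e2 e3) x a c" "step (se_result B i k e0 e2 e3) y c b" "joinok (se_result B i k e0 e2 e3) c x y"
  shows "\<exists>u. c = TlV u \<or> c = HtV u"
  using assms
  by (cases c; auto simp: step_def joinok_def se_flab se_fup se_flo split: if_splits dest: L0(1,2) simp: L0(3,4))



fun phi :: "'v \<Rightarrow> 'v \<Rightarrow> ('v,'e) se_vertex \<Rightarrow> 'v" where
  "phi i k (TlV u) = u" | "phi i k (HtV u) = u" | "phi i k NewW = i" | "phi i k NewCW = k"
| "phi i k (CoConV _) = i" | "phi i k (ConV _) = i"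

fun pe :: "'e \<Rightarrow> 'e \<Rightarrow> 'e \<Rightarrow> ('e se_edge \<times> bool) \<Rightarrow> ('e \<times> bool) list" where
  "pe e0 e2 e3 (TlE x, d) = [(x,d)]"
| "pe e0 e2 e3 (HtE x, d) = [(x,d)]"
| "pe e0 e2 e3 (Mid, d) = (if d then [(e3,True),(e0,False),(e2,True)] else [(e2,False),(e0,True),(e3,False)])"
| "pe e0 e2 e3 (OutU x, d) = []"
| "pe e0 e2 e3 (OutL x, d) = []"

definition good :: "('v,'e) se_vertex \<Rightarrow> bool" where
  "good v \<longleftrightarrow> (case v of CoConV _ \<Rightarrow> False | ConV _ \<Rightarrow> False | _ \<Rightarrow> True)"

locale se_ctx =
  fixes B :: "('v,'e) flow" and i k :: 'v and e0 e2 e3 :: 'e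
  assumes lk: "flab B k = Cut" and li: "flab B i = Interaction"
    and e0: "e0 \<in> fedges B" "fup B e0 = Some i" "flo B e0 = Some k"
    and e2: "e2 \<in> fedges B" "e2 \<noteq> e0" "fup B e2 = Some i"
    and e3: "e3 \<in> fedges B" "e3 \<noteq> e0" "flo B e3 = Some k"
begin

abbreviation "CC \<equiv> se_result B i k e0 e2 e3"

lemma step_proj:
  assumes "step CC x a b" "good a" "good b"
  shows "walk B (phi i k a) (phi i k b) (pe e0 e2 e3 x)"
proof -
  obtain E d where x: "x = (E,d)" by (cases x)
  show ?thesis using assms lk li e0 e2 e3 unfolding x
    by (cases E; cases d; auto simp: step_def joinok_def good_def se_fup se_flo se_fedges split: if_splits option.splits)
qed

lemma pe_ne: assumes "step CC x a b" shows "pe e0 e2 e3 x \<noteq> []"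
proof -
  obtain E d where x: "x = (E,d)" by (cases x)
  show ?thesis using assms unfolding x by (cases E; cases d) (auto simp: step_def se_fup se_flo)
qed

lemma pe_ends: assumes "step CC x a b" shows "snd (hd (pe e0 e2 e3 x)) = snd x \<and> snd (last (pe e0 e2 e3 x)) = snd x"
proof -
  obtain E d where x: "x = (E,d)" by (cases x)
  show ?thesis using assms unfolding x by (cases E; cases d) (auto simp: step_def se_fup se_flo)
qed

lemma join_proj:
  assumes s1: "step CC x a c" and s2: "step CC y c b" and j: "joinok CC c x y"
  shows "joinok B (phi i k c) (last (pe e0 e2 e3 x)) (hd (pe e0 e2 e3 y))"
proof (cases "snd x = snd y")
  case True then show ?thesis using pe_ends[OF s1] pe_ends[OF s2] by (simp add: joinok_def)
next
  case False
  obtain u where u: "c = TlV u \<or> c = HtV u" using joingood[OF s1 s2 j] by blast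
  obtain E d where x: "x = (E,d)" by (cases x)
  obtain E' d' where y: "y = (E',d')" by (cases y)
  show ?thesis using s1 s2 j False u lk li e0 e2 e3 unfolding x y
    by (cases E; cases E'; cases d; cases d'; auto simp: step_def joinok_def se_flab se_fup se_flo se_fedges split: if_splits option.splits)
qed

lemma walk_proj: "walk CC a b ws \<Longrightarrow> good a \<Longrightarrow> good b \<Longrightarrow> walk B (phi i k a) (phi i k b) (concat (map (pe e0 e2 e3) ws))"
proof (induction ws arbitrary: a)
  case Nil then show ?case by simp
next
  case (Cons x ws)
  show ?case
  proof (cases ws)
    case Nil then show ?thesis using Cons.prems step_proj by simp
  next
    case (Cons y ws')
    with Cons.prems obtain c where c: "step CC x a c" "joinok CC c x y" "walk CC c b ws" by auto
    obtain c' where c': "step CC y c c'" using walk_hd_step[of CC c b y ws'] c(3) Cons by auto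
    obtain u where "c = TlV u \<or> c = HtV u" using joingood[OF c(1) c' c(2)] by blast
    then have gc: "good c" by (auto simp: good_def)
    have w1: "walk B (phi i k a) (phi i k c) (pe e0 e2 e3 x)" using step_proj[OF c(1) Cons.prems(2) gc] .
    have w2: "walk B (phi i k c) (phi i k b) (concat (map (pe e0 e2 e3) ws))" using Cons.IH[OF c(3) gc Cons.prems(3)] .
    have "pe e0 e2 e3 y \<noteq> []" using pe_ne[OF c'] .
    then have "hd (concat (map (pe e0 e2 e3) ws)) = hd (pe e0 e2 e3 y)" using Cons by simp
    then have "joinok B (phi i k c) (last (pe e0 e2 e3 x)) (hd (concat (map (pe e0 e2 e3) ws)))"
      using join_proj[OF c(1) c' c(2)] by simp
    from walk_append[OF w1 w2 this] show ?thesis by simp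
  qed
qed

lemma L6:
  assumes s1: "step CC x1 v c1" and s2: "step CC x2 c2 v" and v: "v = CoConV z \<or> v = ConV z"
    and g1: "c1 = TlV u1 \<or> c1 = HtV u1" and g2: "c2 = TlV u2 \<or> c2 = HtV u2" and ne: "fst x1 \<noteq> fst x2"
  shows "c1 \<noteq> c2 \<and> phi i k c1 = phi i k c2"
proof -
  obtain E d where x: "x1 = (E,d)" by (cases x1)
  obtain E' d' where y: "x2 = (E',d')" by (cases x2)
  show ?thesis using s1 s2 v g1 g2 ne e0 e2 e3 unfolding x y
    by (cases E; cases E'; cases d; cases d'; auto simp: step_def se_fup se_flo se_fedges split: if_splits option.splits)
qed

end

context se_ctx begin

lemma step_loop_CoCon: assumes "step CC x v v" "v = CoConV z \<or> v = ConV z" shows False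
proof -
  obtain E d where x: "x = (E,d)" by (cases x)
  show ?thesis using assms unfolding x by (cases E) (auto simp: step_def se_fup se_flo split: if_splits option.splits)
qed

lemma C_cycle:
  assumes "ai_path CC v v es" "distinct es"
  shows "\<exists>c ws. walk B c c ws"
proof -
  obtain ws where w: "walk CC v v ws" "map fst ws = es" using ai_path_walk[OF assms(1)] by blast
  show ?thesis
  proof (cases "good v")
    case True
    from walk_proj[OF w(1) True True] show ?thesis by blast
  next
    case False
    then obtain z where v: "v = CoConV z \<or> v = ConV z" by (cases v) (auto simp: good_def)
    obtain x1 rest where ws: "ws = x1 # rest" using w(1) by (cases ws) auto
    show ?thesis
    proof (cases "rest = []")
      case True
      then have "step CC x1 v v" using w(1) ws by simp
      then show ?thesis using step_loop_CoCon v by blast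
    next
      case False
      then obtain mid x2 where rest: "rest = mid @ [x2]" by (cases rest rule: rev_cases) auto
      have ne: "fst x1 \<noteq> fst x2" using assms(2) w(2) ws rest by auto
      obtain c1 where c1: "walk CC v c1 [x1]" "walk CC c1 v (mid @ [x2])" "joinok CC c1 x1 (hd (mid @ [x2]))"
        using walk_split[of CC v v "[x1]" "mid @ [x2]"] w(1) ws rest by auto
      have s1: "step CC x1 v c1" using c1(1) by simp
      have "walk CC c1 v (hd (mid @ [x2]) # tl (mid @ [x2]))" using c1(2) by simp
      then obtain c1' where "step CC (hd (mid @ [x2])) c1 c1'" using walk_hd_step[of CC c1 v "hd (mid @ [x2])" "tl (mid @ [x2])"] by blast
      then obtain u1 where g1: "c1 = TlV u1 \<or> c1 = HtV u1" using joingood[OF s1 _ c1(3)] by blast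
      show ?thesis
      proof (cases "mid = []")
        case True
        then have "step CC x2 c1 v" using c1(2) by simp
        with L6[OF s1 this v g1 g1 ne] show ?thesis by simp
      next
        case False
        obtain c2 where c2: "walk CC c1 c2 mid" "walk CC c2 v [x2]" "joinok CC c2 (last mid) x2"
          using walk_split[of CC c1 v mid "[x2]"] c1(2) False by auto
        have s2: "step CC x2 c2 v" using c2(2) by simp
        obtain c2' where "step CC (last mid) c2' c2" using walk_last_step[OF c2(1)] by blast
        then obtain u2 where g2: "c2 = TlV u2 \<or> c2 = HtV u2" using joingood[OF _ s2 c2(3)] by blast
        have eq: "phi i k c1 = phi i k c2" using L6[OF s1 s2 v g1 g2 ne] by simp
        have "good c1" "good c2" using g1 g2 by (auto simp: good_def)
        from walk_proj[OF c2(1) this] eq show ?thesis by auto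
      qed
    qed
  qed
qed

end

theorem proposition5p2:
  fixes B :: "('v, 'e) flow" and C :: "(('v, 'e) se_vertex, 'e se_edge) flow"
  assumes "atomic_flow B" and "cycle_free B" and "se_step B C"
  shows "cycle_free C"
proof -
  obtain i k e0 e2 e3 where h: "i \<in> fverts B" "k \<in> fverts B" "flab B i = Interaction" "flab B k = Cut"
      "e0 \<in> fedges B" "fup B e0 = Some i" "flo B e0 = Some k"
      "e2 \<in> fedges B" "e2 \<noteq> e0" "fup B e2 = Some i"
      "e3 \<in> fedges B" "e3 \<noteq> e0" "flo B e3 = Some k"
      "C = se_result B i k e0 e2 e3"
    using assms(3) unfolding se_step_def by blast
  have ends: "\<forall>e\<in>fedges B. (\<forall>v. fup B e = Some v \<longrightarrow> v \<in> fverts B) \<and> (\<forall>v. flo B e = Some v \<longrightarrow> v \<in> fverts B)"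
    using assms(1) unfolding atomic_flow_def by blast
  show ?thesis
  proof (rule ccontr)
    assume "\<not> cycle_free C"
    then obtain v es where "v \<in> fverts C" "ai_path C v v es" "distinct es" unfolding cycle_free_def by blast
    then have aiC: "ai_path (se_result B i k e0 e2 e3) v v es" using h(14) by simp
    have ctx: "se_ctx B i k e0 e2 e3" unfolding se_ctx_def using h by blast
    have "\<exists>c ws. walk B c c ws" using se_ctx.C_cycle[OF ctx aiC \<open>distinct es\<close>] .
    then obtain c ws where "walk B c c ws" by blast
    from walk_shortcut[OF this] obtain c' ws' where w: "walk B c' c' ws'" "distinct (map fst ws')" by blast
    have ai: "ai_path B c' c' (map fst ws')" using walk_ai[OF ends w(1)] .
    obtain x wt where "ws' = x # wt" using w(1) by (cases ws') auto
    then have "walk B c' c' (x # wt)" using w(1) by simp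
    then obtain d where "step B x c' d" using walk_hd_step[of B c' c' x wt] by blast
    then have "c' \<in> fverts B" using ends by (auto simp: step_def split: if_splits)
    then show False using assms(2) ai w(2) unfolding cycle_free_def by blast
  qed
qed

end
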